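(* Let $R$ be an Armendariz ring. Then the polynomial ring $R[x]$ is a generalized right quasi-Baer ring if and only if $R$ is a generalized right quasi-Baer ring.
   Context: All rings are associative with identity. For a nonempty subset $X$ of a ring $R$, $r_R(X)=\{a\in R : xa=0 \text{ for all } x\in X\}$, and for a positive integer $n$, $X^n$ denotes the set of all products $a_1\cdots a_n$ with $a_i\in X$. A ring $R$ is generalized right quasi-Baer if for every right ideal $I$ of $R$ there exist a positive integer $n$ (depending on $I$) and an idempotent $e\in R$ with $r_R(I^n)=eR$. A ring $R$ is Armendariz if whenever polynomials $f(x)=\sum_{i=0}^m a_ix^i$ and $g(x)=\sum_{j=0}^n b_jx^j$ in $R[x]$ satisfy $f(x)g(x)=0$, then $a_ib_j=0$ for all $i,j$. *)

theory Defs
  imports "HOL-Algebra.UnivPoly"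
begin

definition r_ann :: "('a, 'm) ring_scheme \<Rightarrow> 'a set \<Rightarrow> 'a set" where
  "r_ann S X = {a \<in> carrier S. \<forall>x\<in>X. x \<otimes>\<^bsub>S\<^esub> a = \<zero>\<^bsub>S\<^esub>}"

(* X^n = set of all products a_1 \<cdots> a_n with a_i \<in> X (only used for n \<ge> 1) *)
fun set_pow :: "('a, 'm) ring_scheme \<Rightarrow> 'a set \<Rightarrow> nat \<Rightarrow> 'a set" where
  "set_pow S X 0 = {\<one>\<^bsub>S\<^esub>}"
| "set_pow S X (Suc n) = (if n = 0 then X
     else {a \<otimes>\<^bsub>S\<^esub> b | a b. a \<in> set_pow S X n \<and> b \<in> X})"

definition right_ideal :: "'a set \<Rightarrow> ('a, 'm) ring_scheme \<Rightarrow> bool" where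
  "right_ideal I S \<longleftrightarrow> additive_subgroup I S \<and>
     (\<forall>a\<in>I. \<forall>r\<in>carrier S. a \<otimes>\<^bsub>S\<^esub> r \<in> I)"

definition gen_right_quasi_Baer :: "('a, 'm) ring_scheme \<Rightarrow> bool" where
  "gen_right_quasi_Baer S \<longleftrightarrow>
     (\<forall>I. right_ideal I S \<longrightarrow>
        (\<exists>n::nat. n > 0 \<and> (\<exists>e\<in>carrier S. e \<otimes>\<^bsub>S\<^esub> e = e \<and>
           r_ann S (set_pow S I n) = {e \<otimes>\<^bsub>S\<^esub> r | r. r \<in> carrier S})))"

definition armendariz :: "('a, 'm) ring_scheme \<Rightarrow> bool" where
  "armendariz R \<longleftrightarrow>
     (\<forall>f\<in>carrier (UP R). \<forall>g\<in>carrier (UP R).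
        f \<otimes>\<^bsub>UP R\<^esub> g = \<zero>\<^bsub>UP R\<^esub> \<longrightarrow>
        (\<forall>i j. coeff (UP R) f i \<otimes>\<^bsub>R\<^esub> coeff (UP R) g j = \<zero>\<^bsub>R\<^esub>))"

end

theory Submission imports Defs begin

lemma addsubI:
  assumes "ring R" "H \<subseteq> carrier R" "\<zero>\<^bsub>R\<^esub> \<in> H"
    "\<And>a b. a \<in> H \<Longrightarrow> b \<in> H \<Longrightarrow> a \<oplus>\<^bsub>R\<^esub> b \<in> H"
    "\<And>a. a \<in> H \<Longrightarrow> \<ominus>\<^bsub>R\<^esub> a \<in> H"
  shows "additive_subgroup H R"
  unfolding additive_subgroup_def
  apply (rule subgroup.intro)
  using assms by (auto simp: a_inv_def)

lemma set_pow_carrier: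
  assumes "ring S" "X \<subseteq> carrier S"
  shows "set_pow S X n \<subseteq> carrier S"
proof (induct n)
  case 0 then show ?case using assms by (simp add: ring.ring_simprules(6))
next
  case (Suc n) then show ?case using assms by (auto intro: ring.ring_simprules(5))
qed

context UP_ring begin

lemma coeff_mult_monom:
  assumes R: "c \<in> carrier R" and P: "p \<in> carrier P"
  shows "coeff P (p \<otimes>\<^bsub>P\<^esub> monom P c n) (m + n) = (coeff P p m) \<otimes> c"
proof -
  have "coeff P (p \<otimes>\<^bsub>P\<^esub> monom P c n) (m + n) = (\<Oplus>i\<in>{..m + n}. coeff P p i \<otimes> (if n = m + n - i then c else \<zero>))"
    using P R by simp
  also have "\<dots> = (\<Oplus>i\<in>{..m + n}. (if m = i then coeff P p i \<otimes> c else \<zero>))"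
    apply (rule R.finsum_cong') using P R by auto
  also have "\<dots> = coeff P p m \<otimes> c"
    using R.finsum_singleton [of m "{..m + n}" "(\<lambda>i. coeff P p i \<otimes> c)"] P R by auto
  finally show ?thesis .
qed

end

lemma interp: "ring R \<Longrightarrow> UP_ring R"
  by (simp add: UP_ring_def)

context UP_ring begin

lemma H_lemma:
  assumes J: "J \<subseteq> carrier P" and C: "C \<subseteq> carrier R"
    and JC: "\<And>f i. f \<in> J \<Longrightarrow> coeff P f i \<in> C" and n: "n > 0"
  shows "\<forall>p \<in> set_pow P J n. \<forall>r\<in>carrier R. (\<forall>c\<in>set_pow R C n. c \<otimes> r = \<zero>) \<longrightarrow> (\<forall>i. coeff P p i \<otimes> r = \<zero>)"
  using n
proof (induct n)
  case 0 then show ?case by simp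
next
  case (Suc n)
  show ?case
  proof (cases "n = 0")
    case True
    then show ?thesis using JC by auto
  next
    case False
    have IH: "\<forall>p \<in> set_pow P J n. \<forall>r\<in>carrier R. (\<forall>c\<in>set_pow R C n. c \<otimes> r = \<zero>) \<longrightarrow> (\<forall>i. coeff P p i \<otimes> r = \<zero>)"
      using Suc False by simp
    have SP: "set_pow P J n \<subseteq> carrier P" using set_pow_carrier[OF UP_ring J] .
    have SR: "set_pow R C n \<subseteq> carrier R" using set_pow_carrier[OF R.ring_axioms C] .
    show ?thesis
    proof (intro ballI impI allI)
      fix p r k
      assume p: "p \<in> set_pow P J (Suc n)" and r: "r \<in> carrier R"
        and cr: "\<forall>c\<in>set_pow R C (Suc n). c \<otimes> r = \<zero>"
      from p False obtain a b where ab: "p = a \<otimes>\<^bsub>P\<^esub> b" "a \<in> set_pow P J n" "b \<in> J" by auto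
      have aP: "a \<in> carrier P" using ab SP by auto
      have bP: "b \<in> carrier P" using ab J by auto
      have z: "coeff P a i \<otimes> (coeff P b j \<otimes> r) = \<zero>" for i j
      proof -
        have "coeff P b j \<in> C" using JC ab by auto
        have "\<forall>c\<in>set_pow R C n. c \<otimes> (coeff P b j \<otimes> r) = \<zero>"
        proof
          fix c assume c: "c \<in> set_pow R C n"
          then have "c \<otimes> coeff P b j \<in> set_pow R C (Suc n)" using False \<open>coeff P b j \<in> C\<close> by auto
          then have "c \<otimes> coeff P b j \<otimes> r = \<zero>" using cr by blast
          then show "c \<otimes> (coeff P b j \<otimes> r) = \<zero>" using c SR bP r by (simp add: R.m_assoc subsetD)
        qed
        then show ?thesis using IH ab bP r by auto
      qed
      have "coeff P p k \<otimes> r = (\<Oplus>i\<in>{..k}. coeff P a i \<otimes> coeff P b (k - i)) \<otimes> r"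
        using ab aP bP by simp
      also have "\<dots> = (\<Oplus>i\<in>{..k}. coeff P a i \<otimes> coeff P b (k - i) \<otimes> r)"
        by (rule R.finsum_ldistr) (use aP bP r in auto)
      also have "\<dots> = (\<Oplus>i\<in>{..k}. \<zero>)"
        by (rule R.finsum_cong') (use aP bP r z in \<open>auto simp: R.m_assoc\<close>)
      also have "\<dots> = \<zero>" by simp
      finally show "coeff P p k \<otimes> r = \<zero>" .
    qed
  qed
qed

lemma G_lemma:
  assumes J: "J \<subseteq> carrier P" and arm: "armendariz R"
    and n: "n > 0"
  shows "\<forall>g\<in>carrier P. (\<forall>p\<in>set_pow P J n. p \<otimes>\<^bsub>P\<^esub> g = \<zero>\<^bsub>P\<^esub>) \<longrightarrow>
     (\<forall>c\<in>set_pow R {a. \<exists>f\<in>J. \<exists>i. a = coeff P f i} n. \<forall>j. c \<otimes> coeff P g j = \<zero>)"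
  using n
proof (induct n)
  case 0 then show ?case by simp
next
  case (Suc n)
  have A: "\<And>f g i j. f \<in> carrier P \<Longrightarrow> g \<in> carrier P \<Longrightarrow> f \<otimes>\<^bsub>P\<^esub> g = \<zero>\<^bsub>P\<^esub> \<Longrightarrow> coeff P f i \<otimes> coeff P g j = \<zero>"
    using arm unfolding armendariz_def P_def by blast
  define C where "C = {a. \<exists>f\<in>J. \<exists>i. a = coeff P f i}"
  have C: "C \<subseteq> carrier R" using J by (auto simp: C_def)
  show ?case
  proof (cases "n = 0")
    case True
    then show ?thesis using A J by auto
  next
    case False
    have IH: "\<forall>g\<in>carrier P. (\<forall>p\<in>set_pow P J n. p \<otimes>\<^bsub>P\<^esub> g = \<zero>\<^bsub>P\<^esub>) \<longrightarrow>
     (\<forall>c\<in>set_pow R C n. \<forall>j. c \<otimes> coeff P g j = \<zero>)"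
      using Suc False unfolding C_def by simp
    have SP: "set_pow P J n \<subseteq> carrier P" using set_pow_carrier[OF UP_ring J] .
    have SR: "set_pow R C n \<subseteq> carrier R" using set_pow_carrier[OF R.ring_axioms C] .
    show ?thesis unfolding C_def[symmetric]
    proof (intro ballI impI allI)
      fix g c j
      assume g: "g \<in> carrier P" and pg: "\<forall>p\<in>set_pow P J (Suc n). p \<otimes>\<^bsub>P\<^esub> g = \<zero>\<^bsub>P\<^esub>"
        and c: "c \<in> set_pow R C (Suc n)"
      from c False obtain c' b where cb: "c = c' \<otimes> b" "c' \<in> set_pow R C n" "b \<in> C" by auto
      from cb obtain f i where f: "f \<in> J" "b = coeff P f i" unfolding C_def by auto
      have fP: "f \<in> carrier P" using f J by auto
      have c'R: "c' \<in> carrier R" using cb SR by auto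
      have "\<forall>p\<in>set_pow P J n. p \<otimes>\<^bsub>P\<^esub> (f \<otimes>\<^bsub>P\<^esub> g) = \<zero>\<^bsub>P\<^esub>"
      proof
        fix p assume p: "p \<in> set_pow P J n"
        then have "p \<otimes>\<^bsub>P\<^esub> f \<in> set_pow P J (Suc n)" using False f by auto
        moreover have "p \<in> carrier P" using p SP by auto
        ultimately show "p \<otimes>\<^bsub>P\<^esub> (f \<otimes>\<^bsub>P\<^esub> g) = \<zero>\<^bsub>P\<^esub>" using pg fP g by (metis P.m_assoc)
      qed
      then have h: "\<forall>k. c' \<otimes> coeff P (f \<otimes>\<^bsub>P\<^esub> g) k = \<zero>" using IH fP g cb by blast
      have "c' \<odot>\<^bsub>P\<^esub> (f \<otimes>\<^bsub>P\<^esub> g) = \<zero>\<^bsub>P\<^esub>"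
        by (rule up_eqI) (use h c'R fP g in auto)
      then have "(c' \<odot>\<^bsub>P\<^esub> f) \<otimes>\<^bsub>P\<^esub> g = \<zero>\<^bsub>P\<^esub>" using UP_smult_assoc2 c'R fP g by simp
      then have "coeff P (c' \<odot>\<^bsub>P\<^esub> f) i \<otimes> coeff P g j = \<zero>" using A[of "c' \<odot>\<^bsub>P\<^esub> f" g] c'R fP g by simp
      then show "c \<otimes> coeff P g j = \<zero>" using cb f c'R fP by simp
    qed
  qed
qed

end

lemma finsum_in_sub:
  assumes "ring R" "additive_subgroup I R" "finite A" "\<And>i. i \<in> A \<Longrightarrow> f i \<in> I"
  shows "finsum R f A \<in> I"
  using assms(3,4)
proof (induct A rule: finite_induct)
  case empty
  then show ?case using assms(1,2) by (metis abelian_monoid.finsum_empty ring.is_abelian_group abelian_group.axioms(1) additive_subgroup.zero_closed)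
next
  case (insert x F)
  have sub: "I \<subseteq> carrier R" using assms(2) by (rule additive_subgroup.a_subset)
  have "finsum R f (insert x F) = f x \<oplus>\<^bsub>R\<^esub> finsum R f F"
    using insert sub assms(1) by (intro abelian_monoid.finsum_insert abelian_group.axioms(1) ring.is_abelian_group) (auto simp: Pi_def)
  then show ?case using insert assms(2) by (simp add: additive_subgroup.a_closed)
qed

context UP_ring begin

lemma fwd:
  assumes arm: "armendariz R" and gq: "gen_right_quasi_Baer R"
  shows "gen_right_quasi_Baer P"
  unfolding gen_right_quasi_Baer_def
proof (intro allI impI)
  fix J assume rJ: "right_ideal J P"
  have asJ: "additive_subgroup J P" and Jr: "\<And>a r. a \<in> J \<Longrightarrow> r \<in> carrier P \<Longrightarrow> a \<otimes>\<^bsub>P\<^esub> r \<in> J"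
    using rJ unfolding right_ideal_def by auto
  have J: "J \<subseteq> carrier P" using asJ by (rule additive_subgroup.a_subset)
  define C where "C = {a. \<exists>f\<in>J. \<exists>i. a = coeff P f i}"
  have CR: "C \<subseteq> carrier R" using J by (auto simp: C_def)
  have JC: "\<And>f i. f \<in> J \<Longrightarrow> coeff P f i \<in> C" by (auto simp: C_def)
  have rC: "right_ideal C R"
    unfolding right_ideal_def
  proof (intro conjI ballI)
    show "additive_subgroup C R"
    proof (rule addsubI[OF R.ring_axioms CR])
      have "\<zero>\<^bsub>P\<^esub> \<in> J" using asJ by (rule additive_subgroup.zero_closed)
      then show "\<zero> \<in> C" using JC[of "\<zero>\<^bsub>P\<^esub>" 0] by simp
    next
      fix a b assume "a \<in> C" "b \<in> C"
      then obtain f i g j where fg: "f \<in> J" "a = coeff P f i" "g \<in> J" "b = coeff P g j"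
        unfolding C_def by auto
      have fP: "f \<in> carrier P" and gP: "g \<in> carrier P" using fg J by auto
      have f': "f \<otimes>\<^bsub>P\<^esub> monom P \<one> j \<in> J" using Jr fg by simp
      have g': "g \<otimes>\<^bsub>P\<^esub> monom P \<one> i \<in> J" using Jr fg by simp
      have s: "f \<otimes>\<^bsub>P\<^esub> monom P \<one> j \<oplus>\<^bsub>P\<^esub> g \<otimes>\<^bsub>P\<^esub> monom P \<one> i \<in> J"
        using f' g' asJ by (simp add: additive_subgroup.a_closed)
      have "coeff P (f \<otimes>\<^bsub>P\<^esub> monom P \<one> j \<oplus>\<^bsub>P\<^esub> g \<otimes>\<^bsub>P\<^esub> monom P \<one> i) (i + j) = a \<oplus> b"
        using coeff_mult_monom[OF R.one_closed fP, of j i] coeff_mult_monom[OF R.one_closed gP, of i j] fP gP fg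
        by (simp add: add.commute)
      then show "a \<oplus> b \<in> C" using JC[OF s, of "i+j"] by simp
    next
      fix a assume "a \<in> C"
      then obtain f i where f: "f \<in> J" "a = coeff P f i" unfolding C_def by auto
      have "\<ominus>\<^bsub>P\<^esub> f \<in> J" using f asJ by (simp add: additive_subgroup.a_inv_closed)
      then show "\<ominus> a \<in> C" using JC[of "\<ominus>\<^bsub>P\<^esub> f" i] f J by auto
    qed
  next
    fix a r assume a: "a \<in> C" and r: "r \<in> carrier R"
    then obtain f i where f: "f \<in> J" "a = coeff P f i" unfolding C_def by auto
    have fP: "f \<in> carrier P" using f J by auto
    have "f \<otimes>\<^bsub>P\<^esub> monom P r 0 \<in> J" using Jr f r by simp
    then show "a \<otimes> r \<in> C" using JC[of "f \<otimes>\<^bsub>P\<^esub> monom P r 0" i] coeff_mult_monom[OF r fP, of 0 i] f by simp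
  qed
  then obtain n e where n: "n > 0" and e: "e \<in> carrier R" "e \<otimes> e = e"
    and ann: "r_ann R (set_pow R C n) = {e \<otimes> r | r. r \<in> carrier R}"
    using gq unfolding gen_right_quasi_Baer_def by blast
  have SR: "set_pow R C n \<subseteq> carrier R" using set_pow_carrier[OF R.ring_axioms CR] .
  have SP: "set_pow P J n \<subseteq> carrier P" using set_pow_carrier[OF UP_ring J] .
  define E where "E = monom P e 0"
  have EP: "E \<in> carrier P" using e by (simp add: E_def)
  have EE: "E \<otimes>\<^bsub>P\<^esub> E = E" unfolding E_def using monom_mult[OF e(1) e(1), of 0 0] e by simp
  have eann: "\<forall>c\<in>set_pow R C n. c \<otimes> e = \<zero>"
  proof -
    have "e \<in> r_ann R (set_pow R C n)" using ann e by (metis (mono_tags, lifting) R.one_closed R.r_one mem_Collect_eq)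
    then show ?thesis unfolding r_ann_def by auto
  qed
  have "r_ann P (set_pow P J n) = {E \<otimes>\<^bsub>P\<^esub> r | r. r \<in> carrier P}"
  proof (intro equalityI subsetI)
    fix g assume "g \<in> r_ann P (set_pow P J n)"
    then have g: "g \<in> carrier P" "\<forall>p\<in>set_pow P J n. p \<otimes>\<^bsub>P\<^esub> g = \<zero>\<^bsub>P\<^esub>"
      unfolding r_ann_def by auto
    have cg: "\<forall>c\<in>set_pow R C n. \<forall>j. c \<otimes> coeff P g j = \<zero>"
      using G_lemma[OF J arm n] g unfolding C_def by blast
    have "\<And>j. e \<otimes> coeff P g j = coeff P g j"
    proof -
      fix j
      have "coeff P g j \<in> r_ann R (set_pow R C n)" using cg g unfolding r_ann_def by auto
      then obtain r where r: "r \<in> carrier R" "coeff P g j = e \<otimes> r" using ann by auto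
      then show "e \<otimes> coeff P g j = coeff P g j" using e by (simp add: R.m_assoc[symmetric])
    qed
    then have "g = E \<otimes>\<^bsub>P\<^esub> g"
      by (intro up_eqI) (use g e EP in \<open>simp_all add: E_def monom_mult_is_smult\<close>)
    then show "g \<in> {E \<otimes>\<^bsub>P\<^esub> r | r. r \<in> carrier P}" using g by auto
  next
    fix x assume "x \<in> {E \<otimes>\<^bsub>P\<^esub> r | r. r \<in> carrier P}"
    then obtain h where h: "h \<in> carrier P" "x = E \<otimes>\<^bsub>P\<^esub> h" by auto
    have "\<forall>p\<in>set_pow P J n. p \<otimes>\<^bsub>P\<^esub> x = \<zero>\<^bsub>P\<^esub>"
    proof
      fix p assume p: "p \<in> set_pow P J n"
      have pP: "p \<in> carrier P" using p SP by auto
      have "\<forall>i. coeff P p i \<otimes> e = \<zero>" using H_lemma[OF J CR JC n] p e eann by blast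
      then have "p \<otimes>\<^bsub>P\<^esub> E = \<zero>\<^bsub>P\<^esub>"
        by (intro up_eqI) (use coeff_mult_monom[OF e(1) pP, of 0] pP EP in \<open>simp_all add: E_def\<close>)
      then show "p \<otimes>\<^bsub>P\<^esub> x = \<zero>\<^bsub>P\<^esub>" using h pP EP by (simp add: P.m_assoc[symmetric])
    qed
    then show "x \<in> r_ann P (set_pow P J n)" unfolding r_ann_def using h EP by auto
  qed
  then show "\<exists>n>0. \<exists>e\<in>carrier P. e \<otimes>\<^bsub>P\<^esub> e = e \<and> r_ann P (set_pow P J n) = {e \<otimes>\<^bsub>P\<^esub> r |r. r \<in> carrier P}"
    using n EP EE by blast
qed

end

context UP_ring begin

lemma idem_const:
  assumes arm: "armendariz R" and E: "E \<in> carrier P" "E \<otimes>\<^bsub>P\<^esub> E = E"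
  shows "E = monom P (coeff P E 0) 0"
proof -
  have A: "\<And>f g i j. f \<in> carrier P \<Longrightarrow> g \<in> carrier P \<Longrightarrow> f \<otimes>\<^bsub>P\<^esub> g = \<zero>\<^bsub>P\<^esub> \<Longrightarrow> coeff P f i \<otimes> coeff P g j = \<zero>"
    using arm unfolding armendariz_def P_def by blast
  define F where "F = \<one>\<^bsub>P\<^esub> \<ominus>\<^bsub>P\<^esub> E"
  have FP: "F \<in> carrier P" using E by (simp add: F_def)
  have EF: "E \<otimes>\<^bsub>P\<^esub> F = \<zero>\<^bsub>P\<^esub>"
    unfolding F_def using E by (simp add: P.minus_eq P.r_distr P.r_minus P.r_neg)
  have FE: "F \<otimes>\<^bsub>P\<^esub> E = \<zero>\<^bsub>P\<^esub>"
    unfolding F_def using E by (simp add: P.minus_eq P.l_distr P.l_minus P.r_neg)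
  show ?thesis
  proof (rule up_eqI)
    fix i
    show "coeff P E i = coeff P (monom P (coeff P E 0) 0) i"
    proof (cases "i = 0")
      case True then show ?thesis using E by simp
    next
      case False
      let ?e = "coeff P E 0" and ?a = "coeff P E i"
      have eR: "?e \<in> carrier R" and aR: "?a \<in> carrier R" using E by auto
      have 1: "?e \<otimes> coeff P F i = \<zero>" using A[OF E(1) FP EF] .
      have 2: "coeff P F 0 \<otimes> ?a = \<zero>" using A[OF FP E(1) FE] .
      have "coeff P F i = \<ominus> ?a" using False E by (simp add: F_def R.minus_eq)
      with 1 have 3: "?e \<otimes> ?a = \<zero>" using eR aR by (simp add: R.r_minus)
      have "coeff P F 0 = \<one> \<ominus> ?e" using E by (simp add: F_def)
      with 2 have "(\<one> \<ominus> ?e) \<otimes> ?a = \<zero>" by simp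
      moreover have "(\<one> \<ominus> ?e) \<otimes> ?a = ?a \<ominus> ?e \<otimes> ?a" using eR aR by (simp add: R.minus_eq R.l_distr R.l_minus)
      ultimately have "?a = \<zero>" using 3 aR by (simp add: R.minus_eq)
      then show ?thesis using False eR by simp
    qed
  qed (use E in auto)
qed

lemma const_pow:
  assumes I: "I \<subseteq> carrier R" and IJ: "\<And>c. c \<in> I \<Longrightarrow> monom P c 0 \<in> J"
  shows "n > 0 \<Longrightarrow> c \<in> set_pow R I n \<Longrightarrow> monom P c 0 \<in> set_pow P J n"
proof (induct n arbitrary: c)
  case 0 then show ?case by simp
next
  case (Suc n)
  show ?case
  proof (cases "n = 0")
    case True then show ?thesis using Suc IJ by simp
  next
    case False
    from Suc.prems False obtain a b where ab: "c = a \<otimes> b" "a \<in> set_pow R I n" "b \<in> I" by auto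
    have "a \<in> carrier R" using ab set_pow_carrier[OF R.ring_axioms I] by auto
    moreover have "b \<in> carrier R" using ab I by auto
    ultimately have "monom P c 0 = monom P a 0 \<otimes>\<^bsub>P\<^esub> monom P b 0" using ab monom_mult[of a b 0 0] by simp
    moreover have "monom P a 0 \<in> set_pow P J n" using Suc.hyps False ab by simp
    ultimately show ?thesis using False ab IJ by auto
  qed
qed

lemma bwd:
  assumes arm: "armendariz R" and gq: "gen_right_quasi_Baer P"
  shows "gen_right_quasi_Baer R"
  unfolding gen_right_quasi_Baer_def
proof (intro allI impI)
  fix I assume rI: "right_ideal I R"
  have asI: "additive_subgroup I R" and Ir: "\<And>a r. a \<in> I \<Longrightarrow> r \<in> carrier R \<Longrightarrow> a \<otimes> r \<in> I"
    using rI unfolding right_ideal_def by auto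
  have IR: "I \<subseteq> carrier R" using asI by (rule additive_subgroup.a_subset)
  define J where "J = {f \<in> carrier P. \<forall>i. coeff P f i \<in> I}"
  have JP: "J \<subseteq> carrier P" by (auto simp: J_def)
  have JC: "\<And>f i. f \<in> J \<Longrightarrow> coeff P f i \<in> I" by (auto simp: J_def)
  have IJ: "\<And>c. c \<in> I \<Longrightarrow> monom P c 0 \<in> J"
    using IR asI by (auto simp: J_def additive_subgroup.zero_closed)
  have rJ: "right_ideal J P"
    unfolding right_ideal_def
  proof (intro conjI ballI)
    show "additive_subgroup J P"
    proof (rule addsubI[OF UP_ring JP])
      show "\<zero>\<^bsub>P\<^esub> \<in> J" using asI by (simp add: J_def additive_subgroup.zero_closed)
    next
      fix a b assume "a \<in> J" "b \<in> J"
      then show "a \<oplus>\<^bsub>P\<^esub> b \<in> J" using asI by (simp add: J_def additive_subgroup.a_closed)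
    next
      fix a assume "a \<in> J"
      then show "\<ominus>\<^bsub>P\<^esub> a \<in> J" using asI by (simp add: J_def additive_subgroup.a_inv_closed)
    qed
  next
    fix f g assume f: "f \<in> J" and g: "g \<in> carrier P"
    have fP: "f \<in> carrier P" using f by (simp add: J_def)
    have "\<And>k. coeff P (f \<otimes>\<^bsub>P\<^esub> g) k \<in> I"
    proof -
      fix k
      have "(\<Oplus>i\<in>{..k}. coeff P f i \<otimes> coeff P g (k - i)) \<in> I"
        by (rule finsum_in_sub[OF R.ring_axioms asI]) (use f g Ir JC in auto)
      then show "coeff P (f \<otimes>\<^bsub>P\<^esub> g) k \<in> I" using fP g by simp
    qed
    then show "f \<otimes>\<^bsub>P\<^esub> g \<in> J" using fP g by (simp add: J_def)
  qed
  then obtain n E where n: "n > 0" and E: "E \<in> carrier P" "E \<otimes>\<^bsub>P\<^esub> E = E"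
    and ann: "r_ann P (set_pow P J n) = {E \<otimes>\<^bsub>P\<^esub> r | r. r \<in> carrier P}"
    using gq unfolding gen_right_quasi_Baer_def by blast
  define e where "e = coeff P E 0"
  have eR: "e \<in> carrier R" using E by (simp add: e_def)
  have Em: "E = monom P e 0" using idem_const[OF arm E] by (simp add: e_def)
  have ee: "e \<otimes> e = e"
  proof -
    have m: "monom P e 0 \<otimes>\<^bsub>P\<^esub> E = E" using E(2) by (simp add: Em[symmetric])
    have "coeff P (monom P e 0 \<otimes>\<^bsub>P\<^esub> E) (0 + 0) = e \<otimes> coeff P E 0"
      by (rule coeff_monom_mult[OF eR E(1)])
    then show ?thesis unfolding m e_def[symmetric] by simp (metis e_def)
  qed
  have SR: "set_pow R I n \<subseteq> carrier R" using set_pow_carrier[OF R.ring_axioms IR] .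
  have SP: "set_pow P J n \<subseteq> carrier P" using set_pow_carrier[OF UP_ring JP] .
  have "r_ann R (set_pow R I n) = {e \<otimes> r | r. r \<in> carrier R}"
  proof (intro equalityI subsetI)
    fix a assume "a \<in> r_ann R (set_pow R I n)"
    then have a: "a \<in> carrier R" "\<forall>c\<in>set_pow R I n. c \<otimes> a = \<zero>" unfolding r_ann_def by auto
    have "\<forall>p\<in>set_pow P J n. p \<otimes>\<^bsub>P\<^esub> monom P a 0 = \<zero>\<^bsub>P\<^esub>"
    proof
      fix p assume p: "p \<in> set_pow P J n"
      have pP: "p \<in> carrier P" using p SP by auto
      have "\<forall>i. coeff P p i \<otimes> a = \<zero>" using H_lemma[OF JP IR JC n] p a by blast
      then show "p \<otimes>\<^bsub>P\<^esub> monom P a 0 = \<zero>\<^bsub>P\<^esub>"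
        by (intro up_eqI) (use coeff_mult_monom[OF a(1) pP, of 0] pP a in simp_all)
    qed
    then have "monom P a 0 \<in> r_ann P (set_pow P J n)" unfolding r_ann_def using a by auto
    then obtain h where h: "h \<in> carrier P" "monom P a 0 = E \<otimes>\<^bsub>P\<^esub> h" using ann by auto
    have "coeff P (monom P e 0 \<otimes>\<^bsub>P\<^esub> h) (0 + 0) = e \<otimes> coeff P h 0"
      by (rule coeff_monom_mult[OF eR h(1)])
    then have "a = e \<otimes> coeff P h 0" using h Em a by (metis add_0 coeff_monom)
    then show "a \<in> {e \<otimes> r | r. r \<in> carrier R}" using h by auto
  next
    fix x assume "x \<in> {e \<otimes> r | r. r \<in> carrier R}"
    then obtain r where r: "r \<in> carrier R" "x = e \<otimes> r" by auto
    have Eann: "E \<in> r_ann P (set_pow P J n)" using ann E by (metis (mono_tags, lifting) P.r_one UP_one_closed mem_Collect_eq)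
    have "\<forall>c\<in>set_pow R I n. c \<otimes> x = \<zero>"
    proof
      fix c assume c: "c \<in> set_pow R I n"
      have cR: "c \<in> carrier R" using c SR by auto
      have "monom P c 0 \<in> set_pow P J n" using const_pow[OF IR IJ n c] .
      then have "monom P c 0 \<otimes>\<^bsub>P\<^esub> E = \<zero>\<^bsub>P\<^esub>" using Eann unfolding r_ann_def by auto
      then have "coeff P (monom P c 0 \<otimes>\<^bsub>P\<^esub> E) (0 + 0) = \<zero>" by simp
      then have "c \<otimes> e = \<zero>" using coeff_monom_mult[OF cR E(1), of 0 0] by (simp add: e_def)
      then show "c \<otimes> x = \<zero>" using r cR eR by (simp add: R.m_assoc[symmetric])
    qed
    then show "x \<in> r_ann R (set_pow R I n)" unfolding r_ann_def using r eR by auto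
  qed
  then show "\<exists>n>0. \<exists>e\<in>carrier R. e \<otimes> e = e \<and> r_ann R (set_pow R I n) = {e \<otimes> r |r. r \<in> carrier R}"
    using n eR ee by blast
qed

end

theorem corollary3p11:
  fixes R :: "('a, 'm) ring_scheme"
  assumes "ring R" and "armendariz R"
  shows "gen_right_quasi_Baer (UP R) \<longleftrightarrow> gen_right_quasi_Baer R"
proof -
  interpret U: UP_ring R "UP R" using interp[OF assms(1)] by (simp add: UP_ring_def UP_def)
  show ?thesis using U.fwd U.bwd assms(2) by blast
qed

end
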